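(* Let $q\ge 1$ and, for each $k\in\{1,\dots,q\}$, let $M_k\ge 2$ be an integer and $0=x_{k,0}<x_{k,1}<\dots<x_{k,M_k}=1$. Let data values $z_{(1,j_1)\cdots(q,j_q)}\in\mathbb{R}$ be given for all $(j_1,\dots,j_q)\in\prod_{k=1}^q\{0,1,\dots,M_k\}$. Let the maps $u_{k,i}$ and the function $\eta$ be as in the context, and for each $(i_1,\dots,i_q)\in\prod_{k=1}^q\{1,\dots,M_k\}$ let $F_{i_1\cdots i_q}:I^q\times\mathbb{R}\to\mathbb{R}$ be continuous and satisfy: (1) $F_{i_1\cdots i_q}\big(x_{1,k_1},\dots,x_{q,k_q},z_{(1,k_1)\cdots(q,k_q)}\big)=z_{(1,\eta(i_1,k_1))\cdots(q,\eta(i_q,k_q))}$ for all $(k_1,\dots,k_q)\in\prod_{j=1}^q\{0,M_j\}$; (2) there is $0<\gamma_{i_1\cdots i_q}<1$ with $|F_{i_1\cdots i_q}(x,z^* )-F_{i_1\cdots i_q}(x,z^{**})|\le\gamma_{i_1\cdots i_q}|z^*-z^{**}|$ for all $x\in I^q$, $z^*,z^{**}\in\mathbb{R}$; (3) (matching conditions) for every $k\in\{1,\dots,q\}$, every $i_k\in\{1,\dots,M_k-1\}$ and every choice of $i_j\in\{1,\dots,M_j\}$ for $j\ne k$, putting $x_k^*=u_{k,i_k}^{-1}(x_{k,i_k})=u_{k,i_k+1}^{-1}(x_{k,i_k})$, one has $F_{i_1\cdots i_{k-1}\,i_k\,i_{k+1}\cdots i_q}(x_1,\dots,x_{k-1},x_k^*,x_{k+1},\dots,x_q,z)=F_{i_1\cdots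 i_{k-1}\,(i_k+1)\,i_{k+1}\cdots i_q}(x_1,\dots,x_{k-1},x_k^*,x_{k+1},\dots,x_q,z)$ for all $x_j\in I$ ($j\neq k$) and $z\in\mathbb{R}$. Define $\Omega_{i_1\cdots i_q}:I^q\times\mathbb{R}\to I^q\times\mathbb{R}$ by $\Omega_{i_1\cdots i_q}(x_1,\dots,x_q,z)=\big(u_{1,i_1}(x_1),\dots,u_{q,i_q}(x_q),F_{i_1\cdots i_q}(x_1,\dots,x_q,z)\big)$. Then there is a unique continuous function $\mathcal{A}:I^q\to\mathbb{R}$ whose graph $H=\{(x,\mathcal{A}(x)):x\in I^q\}$ satisfies $H=\bigcup_{(i_1,\dots,i_q)\in\prod_k\{1,\dots,M_k\}}\Omega_{i_1\cdots i_q}(H)$; moreover $\mathcal{A}(x_{1,j_1},\dots,x_{q,j_q})=z_{(1,j_1)\cdots(q,j_q)}$ for all $(j_1,\dots,j_q)\in\prod_{k=1}^q\{0,\dots,M_k\}$.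
   Context: $I=[0,1]$, $I^q$ is the $q$-fold Cartesian product. For $k\in\{1,\dots,q\}$ and $i\in\{1,\dots,M_k\}$, $I_{k,i}=[x_{k,i-1},x_{k,i}]$ and $u_{k,i}:I\to I_{k,i}$ is a homeomorphism onto $I_{k,i}$ which is a contraction ($|u_{k,i}(x)-u_{k,i}(y)|\le\mu_{k,i}|x-y|$ with $0<\mu_{k,i}<1$) and satisfies $u_{k,i}(0)=x_{k,i-1}$, $u_{k,i}(1)=x_{k,i}$ if $i$ is odd, and $u_{k,i}(0)=x_{k,i}$, $u_{k,i}(1)=x_{k,i-1}$ if $i$ is even. The function $\eta$ is defined on pairs $(i,e)$ with $i$ an integer and $e\in\{0,M_1,\dots,M_q\}$ by: if $i$ is odd, $\eta(i,0)=i-1$ and $\eta(i,M_j)=i$; if $i$ is even, $\eta(i,0)=i$ and $\eta(i,M_j)=i-1$. *)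

theory Defs
  imports "HOL-Analysis.Analysis"
begin

definition cube :: "nat \<Rightarrow> (nat \<Rightarrow> real) set" where
  "cube q = PiE {1..q} (\<lambda>_. {0..1})"

text \<open>The function eta; the second argument is either 0 or some M_j (M_j \<ge> 2).\<close>
definition eta :: "nat \<Rightarrow> nat \<Rightarrow> nat" where
  "eta i e = (if odd i then (if e = 0 then i - 1 else i) else (if e = 0 then i else i - 1))"

end

theory Submission
  imports Defs
begin

definition cellS :: "(nat \<Rightarrow> nat \<Rightarrow> real) \<Rightarrow> nat \<Rightarrow> (nat \<Rightarrow> nat) \<Rightarrow> (nat \<Rightarrow> real) set" where
  "cellS xg q i = PiE {1..q} (\<lambda>k. {xg k (i k - 1)..xg k (i k)})"


lemma closed_PiE_real:
  assumes "\<And>k. k \<in> I \<Longrightarrow> closed (S k :: real set)"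
  shows "closed (PiE (I::nat set) S)"
proof -
  have eq: "PiE I S = (\<Inter>k. (\<lambda>f. f k) -` (if k \<in> I then S k else {undefined}))"
    by (auto simp: PiE_iff extensional_def split: if_splits)
  show ?thesis unfolding eq
  proof (intro closed_INT ballI)
    fix k :: nat
    have *: "closed ((\<lambda>f::nat \<Rightarrow> real. f k) -` T)" if "closed T" for T :: "real set"
      by (rule closed_vimage[OF that]) simp
    show "closed ((\<lambda>f. f k) -` (if k \<in> I then S k else {undefined}))"
      by (cases "k \<in> I") (auto intro!: * assms)
  qed
qed

lemma compact_cube: "compact (cube q)"
proof -
  define S' where "S' = (\<lambda>k::nat. if k \<in> {1..q} then {0..1::real} else {undefined})"
  have eq: "cube q = PiE UNIV S'"
    by (auto simp: cube_def S'_def PiE_iff extensional_def split: if_splits)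
  have "compactin (product_topology (\<lambda>_. euclidean) UNIV) (PiE UNIV S')"
    by (subst compactin_PiE) (auto simp: S'_def)
  then show ?thesis unfolding eq euclidean_product_topology by simp
qed

locale fif =
  fixes q :: nat
    and M :: "nat \<Rightarrow> nat"
    and xg :: "nat \<Rightarrow> nat \<Rightarrow> real"
    and z :: "(nat \<Rightarrow> nat) \<Rightarrow> real"
    and u :: "nat \<Rightarrow> nat \<Rightarrow> real \<Rightarrow> real"
    and F :: "(nat \<Rightarrow> nat) \<Rightarrow> (nat \<Rightarrow> real) \<Rightarrow> real \<Rightarrow> real"
  assumes q: "q \<ge> 1"
    and M: "\<And>k. k \<in> {1..q} \<Longrightarrow> M k \<ge> 2"
    and grid0: "\<And>k. k \<in> {1..q} \<Longrightarrow> xg k 0 = 0"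
    and grid1: "\<And>k. k \<in> {1..q} \<Longrightarrow> xg k (M k) = 1"
    and grid_mono: "\<And>k i. k \<in> {1..q} \<Longrightarrow> i < M k \<Longrightarrow> xg k i < xg k (Suc i)"
    and u_homeo: "\<And>k i. k \<in> {1..q} \<Longrightarrow> i \<in> {1..M k} \<Longrightarrow>
        \<exists>g. homeomorphism {0..1} {xg k (i - 1)..xg k i} (u k i) g"
    and u_contr: "\<And>k i. k \<in> {1..q} \<Longrightarrow> i \<in> {1..M k} \<Longrightarrow>
        \<exists>\<mu>. 0 < \<mu> \<and> \<mu> < 1 \<and>
          (\<forall>a\<in>{0..1}. \<forall>b\<in>{0..1}. \<bar>u k i a - u k i b\<bar> \<le> \<mu> * \<bar>a - b\<bar>)"
    and u_odd: "\<And>k i. k \<in> {1..q} \<Longrightarrow> i \<in> {1..M k} \<Longrightarrow> odd i \<Longrightarrow>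
        u k i 0 = xg k (i - 1) \<and> u k i 1 = xg k i"
    and u_even: "\<And>k i. k \<in> {1..q} \<Longrightarrow> i \<in> {1..M k} \<Longrightarrow> even i \<Longrightarrow>
        u k i 0 = xg k i \<and> u k i 1 = xg k (i - 1)"
    and F_cont: "\<And>i. i \<in> PiE {1..q} (\<lambda>k. {1..M k}) \<Longrightarrow>
        continuous_on (cube q \<times> UNIV) (\<lambda>(x, w). F i x w)"
    and F_vert: "\<And>i e. i \<in> PiE {1..q} (\<lambda>k. {1..M k}) \<Longrightarrow> e \<in> PiE {1..q} (\<lambda>j. {0, M j}) \<Longrightarrow>
        F i (restrict (\<lambda>j. xg j (e j)) {1..q}) (z e) = z (restrict (\<lambda>j. eta (i j) (e j)) {1..q})"
    and F_contr: "\<And>i. i \<in> PiE {1..q} (\<lambda>k. {1..M k}) \<Longrightarrow>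
        \<exists>\<gamma>. 0 < \<gamma> \<and> \<gamma> < 1 \<and>
          (\<forall>x\<in>cube q. \<forall>a b. \<bar>F i x a - F i x b\<bar> \<le> \<gamma> * \<bar>a - b\<bar>)"
    and F_match: "\<And>k i x w. k \<in> {1..q} \<Longrightarrow> i \<in> PiE {1..q} (\<lambda>k. {1..M k}) \<Longrightarrow>
        i k \<in> {1..M k - 1} \<Longrightarrow> x \<in> cube q \<Longrightarrow>
        F i (x(k := the_inv_into {0..1} (u k (i k)) (xg k (i k)))) w =
        F (i(k := Suc (i k))) (x(k := the_inv_into {0..1} (u k (i k)) (xg k (i k)))) w"

begin

abbreviation "C \<equiv> cube q"
abbreviation "IDX \<equiv> PiE {1..q} (\<lambda>k. {1..M k})"
definition gi where "gi k i = the_inv_into {0..1} (u k i)"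
definition pre where "pre i y = restrict (\<lambda>k. gi k (i k) (y k)) {1..q}"
definition U where "U i x = restrict (\<lambda>k. u k (i k) (x k)) {1..q}"
abbreviation "cell i \<equiv> cellS xg q i"

lemma xg_less: "k \<in> {1..q} \<Longrightarrow> a < b \<Longrightarrow> b \<le> M k \<Longrightarrow> xg k a < xg k b"
proof (induction b)
  case 0 then show ?case by simp
next
  case (Suc b)
  have "xg k b < xg k (Suc b)" using grid_mono Suc by simp
  then show ?case using Suc by (cases "a = b") auto
qed

lemma xg_le: "k \<in> {1..q} \<Longrightarrow> a \<le> b \<Longrightarrow> b \<le> M k \<Longrightarrow> xg k a \<le> xg k b"
  using xg_less[of k a b] by (cases "a = b") auto

lemma xg_range: "k \<in> {1..q} \<Longrightarrow> j \<le> M k \<Longrightarrow> 0 \<le> xg k j \<and> xg k j \<le> 1"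
  using xg_le[of k 0 j] xg_le[of k j "M k"] grid0 grid1 by auto

lemma u_props:
  assumes k: "k \<in> {1..q}" and i: "i \<in> {1..M k}"
  shows "\<And>t. t \<in> {0..1} \<Longrightarrow> u k i t \<in> {xg k (i-1)..xg k i} \<and> gi k i (u k i t) = t"
    and "\<And>y. y \<in> {xg k (i-1)..xg k i} \<Longrightarrow> gi k i y \<in> {0..1} \<and> u k i (gi k i y) = y"
    and "continuous_on {0..1} (u k i)"
    and "continuous_on {xg k (i-1)..xg k i} (gi k i)"
proof -
  obtain g where h: "homeomorphism {0..1} {xg k (i - 1)..xg k i} (u k i) g"
    using u_homeo[OF k i] by blast
  have inj: "inj_on (u k i) {0..1}"
    by (metis h homeomorphism_apply1 inj_on_inverseI)
  have gg: "gi k i y = g y" if "y \<in> {xg k (i-1)..xg k i}" for y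
  proof -
    have "g y \<in> {0..1}" using homeomorphism_image2[OF h] that by blast
    moreover have "u k i (g y) = y" using homeomorphism_apply2[OF h] that by blast
    ultimately show ?thesis unfolding gi_def using the_inv_into_f_f[OF inj] by metis
  qed
  show "u k i t \<in> {xg k (i-1)..xg k i} \<and> gi k i (u k i t) = t" if "t \<in> {0..1}" for t
  proof
    show "u k i t \<in> {xg k (i-1)..xg k i}" using homeomorphism_image1[OF h] that by blast
    show "gi k i (u k i t) = t" unfolding gi_def using the_inv_into_f_f[OF inj that] .
  qed
  show "gi k i y \<in> {0..1} \<and> u k i (gi k i y) = y" if "y \<in> {xg k (i-1)..xg k i}" for y
    unfolding gg[OF that] using homeomorphism_image2[OF h] homeomorphism_apply2[OF h] that by blast
  show "continuous_on {0..1} (u k i)" using homeomorphism_cont1[OF h] .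
  show "continuous_on {xg k (i-1)..xg k i} (gi k i)"
    using continuous_on_cong[OF refl gg, of "{xg k (i-1)..xg k i}"] homeomorphism_cont2[OF h] by simp
qed

lemma gi_right: "k \<in> {1..q} \<Longrightarrow> i \<in> {1..M k} \<Longrightarrow> gi k i (xg k i) = (if odd i then 1 else 0)"
  using u_props(1)[of k i 0] u_props(1)[of k i 1] u_odd[of k i] u_even[of k i] by auto

lemma gi_left: "k \<in> {1..q} \<Longrightarrow> i \<in> {1..M k} \<Longrightarrow> gi k i (xg k (i-1)) = (if odd i then 0 else 1)"
  using u_props(1)[of k i 0] u_props(1)[of k i 1] u_odd[of k i] u_even[of k i] by auto

lemma coord_cover:
  assumes k: "k \<in> {1..q}" and t: "t \<in> {0..1}"
  shows "\<exists>i\<in>{1..M k}. t \<in> {xg k (i-1)..xg k i}"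
proof -
  define P where "P i = (1 \<le> i \<and> t \<le> xg k i)" for i
  have PM: "P (M k)" using M[OF k] grid1[OF k] t by (auto simp: P_def)
  define i where "i = Least P"
  have Pi: "P i" unfolding i_def by (rule LeastI[of P, OF PM])
  have iM: "i \<le> M k" unfolding i_def by (rule Least_le[of P, OF PM])
  have low: "xg k (i-1) \<le> t"
  proof (cases "i = 1")
    case True then show ?thesis using grid0[OF k] t by simp
  next
    case False
    then have "i - 1 < i" "1 \<le> i - 1" using Pi by (auto simp: P_def)
    then have "\<not> P (i - 1)" unfolding i_def by (metis not_less_Least i_def)
    then show ?thesis using \<open>1 \<le> i - 1\<close> by (auto simp: P_def)
  qed
  show ?thesis using Pi iM low by (auto simp: P_def intro!: bexI[of _ i])
qed

lemma cover: "y \<in> C \<Longrightarrow> \<exists>i\<in>IDX. y \<in> cell i"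
proof -
  assume y: "y \<in> C"
  have "\<forall>k\<in>{1..q}. \<exists>i. i \<in> {1..M k} \<and> y k \<in> {xg k (i-1)..xg k i}"
  proof
    fix k assume k: "k \<in> {1..q}"
    have "y k \<in> {0..1}" using y k by (auto simp: cube_def)
    then show "\<exists>i. i \<in> {1..M k} \<and> y k \<in> {xg k (i-1)..xg k i}" using coord_cover[OF k] by blast
  qed
  then obtain f where f: "\<forall>k\<in>{1..q}. f k \<in> {1..M k} \<and> y k \<in> {xg k (f k - 1)..xg k (f k)}"
    by metis
  show ?thesis
    apply (rule bexI[of _ "restrict f {1..q}"])
    using f y by (auto simp: cellS_def cube_def PiE_iff)
qed

lemma cell_sub: "i \<in> IDX \<Longrightarrow> cell i \<subseteq> C"
proof
  fix y assume i: "i \<in> IDX" and y: "y \<in> cell i"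
  show "y \<in> C" unfolding cube_def
  proof (rule PiE_I)
    fix k assume k: "k \<in> {1..q}"
    have ik: "i k \<in> {1..M k}" using i k by auto
    have "y k \<in> {xg k (i k - 1)..xg k (i k)}" using y k by (auto simp: cellS_def)
    moreover have "i k - 1 \<le> M k" "i k \<le> M k" using ik by auto
    ultimately show "y k \<in> {0..1}" using xg_range[OF k, of "i k - 1"] xg_range[OF k, of "i k"] by auto
  next
    fix k assume "k \<notin> {1..q}" then show "y k = undefined" using y by (auto simp: cellS_def)
  qed
qed

lemma U_cell: assumes i: "i \<in> IDX" and x: "x \<in> C" shows "U i x \<in> cell i" "pre i (U i x) = x"
proof -
  have xk: "x k \<in> {0..1}" if "k \<in> {1..q}" for k using x that by (auto simp: cube_def)
  have ik: "i k \<in> {1..M k}" if "k \<in> {1..q}" for k using i that by auto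
  show "U i x \<in> cell i" unfolding U_def cellS_def using u_props(1)[OF _ ik xk] by auto
  show "pre i (U i x) = x"
  proof
    fix k show "pre i (U i x) k = x k"
      using u_props(1)[OF _ ik xk, of k] x by (cases "k \<in> {1..q}") (auto simp: pre_def U_def cube_def)
  qed
qed

lemma pre_cell: assumes i: "i \<in> IDX" and y: "y \<in> cell i" shows "pre i y \<in> C" "U i (pre i y) = y"
proof -
  have yk: "y k \<in> {xg k (i k - 1)..xg k (i k)}" if "k \<in> {1..q}" for k using y that by (auto simp: cellS_def)
  have ik: "i k \<in> {1..M k}" if "k \<in> {1..q}" for k using i that by auto
  show "pre i y \<in> C" unfolding pre_def cube_def using u_props(2)[OF _ ik yk] by auto
  show "U i (pre i y) = y"
  proof
    fix k show "U i (pre i y) k = y k"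
      using u_props(2)[OF _ ik yk, of k] y by (cases "k \<in> {1..q}") (auto simp: pre_def U_def cellS_def)
  qed
qed

lemma adj:
  assumes k: "k \<in> {1..q}" and i: "i \<in> {1..M k}" and i': "i' \<in> {1..M k}" and lt: "i < i'"
    and t1: "t \<in> {xg k (i-1)..xg k i}" and t2: "t \<in> {xg k (i'-1)..xg k i'}"
  shows "i' = Suc i \<and> t = xg k i"
proof -
  have "\<not> i < i' - 1"
  proof
    assume "i < i' - 1"
    then have "xg k i < xg k (i' - 1)" using xg_less[OF k] i' by auto
    then show False using t1 t2 by auto
  qed
  then have "i' = Suc i" using lt by auto
  then show ?thesis using t1 t2 by auto
qed

lemma gi_adj: "k \<in> {1..q} \<Longrightarrow> i \<in> {1..M k} \<Longrightarrow> Suc i \<in> {1..M k} \<Longrightarrow>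
   gi k i (xg k i) = gi k (Suc i) (xg k i)"
  using gi_right[of k i] gi_left[of k "Suc i"] by auto

lemma pre_eq:
  assumes i: "i \<in> IDX" and i': "i' \<in> IDX" and y: "y \<in> cell i" and y': "y \<in> cell i'"
  shows "pre i y = pre i' y"
proof
  fix k show "pre i y k = pre i' y k"
  proof (cases "k \<in> {1..q}")
    case nk: False then show ?thesis using nk unfolding pre_def restrict_def by (simp del: atLeastAtMost_iff)
  next
    case k: True
    have ik: "i k \<in> {1..M k}" "i' k \<in> {1..M k}" using i i' k by auto
    have t: "y k \<in> {xg k (i k - 1)..xg k (i k)}" "y k \<in> {xg k (i' k - 1)..xg k (i' k)}"
      using y y' k by (auto simp: cellS_def)
    have pk: "pre i y k = gi k (i k) (y k)" "pre i' y k = gi k (i' k) (y k)" using k by (simp_all add: pre_def)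
    consider "i k < i' k" | "i k = i' k" | "i' k < i k" by linarith
    then show ?thesis
    proof cases
      case 1
      with adj[OF k ik 1 t] gi_adj[OF k ik(1)] ik show ?thesis unfolding pk by simp
    next
      case 2 then show ?thesis by (simp add: pre_def)
    next
      case 3
      with adj[OF k ik(2,1) 3 t(2,1)] gi_adj[OF k ik(2)] ik show ?thesis unfolding pk by simp
    qed
  qed
qed

lemma agree_n:
  "\<forall>i i'. i \<in> IDX \<longrightarrow> i' \<in> IDX \<longrightarrow> y \<in> cell i \<longrightarrow> y \<in> cell i' \<longrightarrow>
     card {k\<in>{1..q}. i k \<noteq> i' k} = n \<longrightarrow> F i (pre i y) w = F i' (pre i y) w"
proof (induction n)
  case 0
  show ?case
  proof (intro allI impI)
    fix i i' assume i: "i \<in> IDX" and i': "i' \<in> IDX" and c: "card {k\<in>{1..q}. i k \<noteq> i' k} = 0"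
    have "{k\<in>{1..q}. i k \<noteq> i' k} = {}" using c by simp
    then have eqk: "\<forall>k\<in>{1..q}. i k = i' k" by auto
    have "i = i'"
    proof
      fix k show "i k = i' k"
        using eqk PiE_arb[OF i, of k] PiE_arb[OF i', of k] by (cases "k \<in> {1..q}") auto
    qed
    then show "F i (pre i y) w = F i' (pre i y) w" by simp
  qed
next
  case (Suc n)
  show ?case
  proof (intro allI impI)
    fix i i' assume i: "i \<in> IDX" and i': "i' \<in> IDX" and y: "y \<in> cell i" and y': "y \<in> cell i'"
      and c: "card {k\<in>{1..q}. i k \<noteq> i' k} = Suc n"
    have "{k\<in>{1..q}. i k \<noteq> i' k} \<noteq> {}" using c by (metis card.empty nat.distinct(1))
    then obtain k where k: "k \<in> {1..q}" and ne: "i k \<noteq> i' k" by auto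
    have ik: "i k \<in> {1..M k}" "i' k \<in> {1..M k}" using i i' k by auto
    have t: "y k \<in> {xg k (i k - 1)..xg k (i k)}" "y k \<in> {xg k (i' k - 1)..xg k (i' k)}"
      using y y' k by (auto simp: cellS_def)
    have pe: "pre i y = pre i' y" by (rule pre_eq[OF i i' y y'])
    have fin: "finite {k\<in>{1..q}. i k \<noteq> i' k}" by simp
    have step: "F j (pre j y) w = F (j(k := Suc (j k))) (pre j y) w"
      if j: "j \<in> IDX" and jy: "y \<in> cell j" and jk: "j k \<in> {1..M k - 1}" and yk: "y k = xg k (j k)" for j
    proof -
      have x: "pre j y \<in> C" by (rule pre_cell(1)[OF j jy])
      have "(pre j y)(k := the_inv_into {0..1} (u k (j k)) (xg k (j k))) = pre j y"
        using k yk by (auto simp: pre_def gi_def)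
      then show ?thesis using F_match[OF k j jk x, of w] by simp
    qed
    consider "i k < i' k" | "i' k < i k" using ne by linarith
    then show "F i (pre i y) w = F i' (pre i y) w"
    proof cases
      case 1
      note a = adj[OF k ik 1 t]
      define j where "j = i(k := i' k)"
      have j: "j \<in> IDX" using i k ik by (auto simp: j_def PiE_iff extensional_def)
      have jy: "y \<in> cell j" using y t k by (auto simp: j_def cellS_def PiE_iff)
      have D: "{k\<in>{1..q}. j k \<noteq> i' k} = {k\<in>{1..q}. i k \<noteq> i' k} - {k}" by (auto simp: j_def)
      have cj: "card {k\<in>{1..q}. j k \<noteq> i' k} = n" unfolding D using c k ne fin by simp
      have pj: "pre j y = pre i y" by (rule pre_eq[OF j i jy y])
      have ikm: "i k \<in> {1..M k - 1}" using 1 ik by auto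
      have "F i (pre i y) w = F (i(k := Suc (i k))) (pre i y) w"
        by (rule step[OF i y ikm]) (use a in simp)
      also have "\<dots> = F j (pre i y) w" using a unfolding j_def by simp
      also have "\<dots> = F i' (pre i y) w"
      proof -
        have "F j (pre j y) w = F i' (pre j y) w" using Suc.IH j i' jy y' cj by blast
        then show ?thesis using pj by simp
      qed
      finally show ?thesis .
    next
      case 2
      note a = adj[OF k ik(2,1) 2 t(2,1)]
      define j where "j = i'(k := i k)"
      have j: "j \<in> IDX" using i' k ik by (auto simp: j_def PiE_iff extensional_def)
      have jy: "y \<in> cell j" using y' t k by (auto simp: j_def cellS_def PiE_iff)
      have D: "{k\<in>{1..q}. i k \<noteq> j k} = {k\<in>{1..q}. i k \<noteq> i' k} - {k}" by (auto simp: j_def)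
      have cj: "card {k\<in>{1..q}. i k \<noteq> j k} = n" unfolding D using c k ne fin by simp
      have ikm: "i' k \<in> {1..M k - 1}" using 2 ik by auto
      have "F i (pre i y) w = F j (pre i y) w"
        using Suc.IH i j y jy cj by blast
      also have "\<dots> = F (i'(k := Suc (i' k))) (pre i' y) w" using a pe unfolding j_def by simp
      also have "\<dots> = F i' (pre i y) w"
        using step[OF i' y' ikm] a pe by simp
      finally show ?thesis .
    qed
  qed
qed

lemma agree: "i \<in> IDX \<Longrightarrow> i' \<in> IDX \<Longrightarrow> y \<in> cell i \<Longrightarrow> y \<in> cell i' \<Longrightarrow>
   F i (pre i y) w = F i' (pre i y) w"
  using agree_n by blast

definition ch where "ch y = (SOME i. i \<in> IDX \<and> y \<in> cell i)"
definition T where "T a y = (if y \<in> C then F (ch y) (pre (ch y) y) (a (pre (ch y) y)) else undefined)"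

lemma ch: "y \<in> C \<Longrightarrow> ch y \<in> IDX \<and> y \<in> cell (ch y)"
  unfolding ch_def using cover[of y] by (metis (mono_tags, lifting) someI_ex)

lemma T_eq: assumes i: "i \<in> IDX" and y: "y \<in> cell i" shows "T a y = F i (pre i y) (a (pre i y))"
proof -
  have yC: "y \<in> C" using cell_sub[OF i] y by blast
  note c = ch[OF yC]
  have pe: "pre (ch y) y = pre i y" using pre_eq c i y by blast
  have "T a y = F (ch y) (pre (ch y) y) (a (pre (ch y) y))" using yC by (simp add: T_def)
  also have "\<dots> = F i (pre (ch y) y) (a (pre (ch y) y))" using agree c i y by blast
  finally show ?thesis using pe by simp
qed

lemma T_U: "i \<in> IDX \<Longrightarrow> x \<in> C \<Longrightarrow> T a (U i x) = F i x (a x)"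
  using T_eq[of i "U i x" a] U_cell[of i x] by simp

lemma T_ext: "T a \<in> extensional C"
  by (simp add: T_def extensional_def)

lemma cont_pre: assumes i: "i \<in> IDX" shows "continuous_on (cell i) (pre i)"
  unfolding pre_def
proof (rule continuous_on_coordinatewise_then_product)
  fix j show "continuous_on (cell i) (\<lambda>y. restrict (\<lambda>k. gi k (i k) (y k)) {1..q} j)"
  proof (cases "j \<in> {1..q}")
    case True
    have ij: "i j \<in> {1..M j}" using i True by auto
    have "continuous_on (cell i) (\<lambda>y. gi j (i j) (y j))"
    proof (rule continuous_on_compose2[OF u_props(4)[OF True ij]])
      show "continuous_on (cell i) (\<lambda>y. y j)"
        by (rule continuous_on_subset[OF continuous_on_product_coordinates]) simp
      show "(\<lambda>y. y j) ` cell i \<subseteq> {xg j (i j - 1)..xg j (i j)}"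
        using True by (auto simp: cellS_def)
    qed
    then show ?thesis using True by simp
  next
    case nj: False then show ?thesis by (simp add: restrict_def nj del: atLeastAtMost_iff)
  qed
qed

lemma cell_closed: "closed (cell i)"
  unfolding cellS_def by (rule closed_PiE_real) simp

lemma finite_IDX: "finite IDX" by (simp add: finite_PiE)

lemma C_union: "C = (\<Union>i\<in>IDX. cell i)"
  using cover cell_sub by blast

lemma T_cont: assumes a: "continuous_on C a" shows "continuous_on C (T a)"
proof -
  have "continuous_on (\<Union>i\<in>IDX. cell i) (T a)"
  proof (rule continuous_on_closed_Union[OF finite_IDX cell_closed])
    fix i assume i: "i \<in> IDX"
    have pc: "pre i ` cell i \<subseteq> C" using pre_cell(1)[OF i] by blast
    have c1: "continuous_on (cell i) (\<lambda>y. (pre i y, a (pre i y)))"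
      by (intro continuous_on_Pair cont_pre[OF i] continuous_on_compose2[OF a cont_pre[OF i] pc])
    have c2: "continuous_on (cell i) (\<lambda>y. (\<lambda>(x, w). F i x w) (pre i y, a (pre i y)))"
      by (rule continuous_on_compose2[OF F_cont[OF i] c1]) (use pc in auto)
    show "continuous_on (cell i) (T a)"
      using c2 by (rule continuous_on_eq) (simp add: T_eq[OF i])
  qed
  then show ?thesis using C_union by simp
qed

definition gam where "gam i = (SOME \<gamma>. 0 < \<gamma> \<and> \<gamma> < 1 \<and>
          (\<forall>x\<in>cube q. \<forall>a b. \<bar>F i x a - F i x b\<bar> \<le> \<gamma> * \<bar>a - b\<bar>))"

lemma gam: "i \<in> IDX \<Longrightarrow> 0 < gam i \<and> gam i < 1 \<and>
          (\<forall>x\<in>cube q. \<forall>a b. \<bar>F i x a - F i x b\<bar> \<le> gam i * \<bar>a - b\<bar>)"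
  unfolding gam_def using F_contr by (rule someI_ex)

definition g where "g = Max (gam ` IDX)"

lemma IDX_ne: "IDX \<noteq> {}"
proof -
  have "\<forall>k\<in>{1..q}. 1 \<le> M k" using M by (metis le_trans one_le_numeral)
  then have "restrict (\<lambda>_. 1) {1..q} \<in> IDX" by (auto simp: PiE_iff)
  then show ?thesis by blast
qed

lemma g_ge: "i \<in> IDX \<Longrightarrow> gam i \<le> g"
  unfolding g_def using finite_IDX by (simp add: Max_ge)

lemma g_pos: "0 < g" and g_lt1: "g < 1"
proof -
  obtain i where i: "i \<in> IDX" using IDX_ne by blast
  show "0 < g" using gam[OF i] g_ge[OF i] by simp
  have "g \<in> gam ` IDX" unfolding g_def using finite_IDX IDX_ne by (simp add: Max_in)
  then show "g < 1" using gam by auto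
qed

lemma F_lip: "i \<in> IDX \<Longrightarrow> x \<in> C \<Longrightarrow> \<bar>F i x a - F i x b\<bar> \<le> g * \<bar>a - b\<bar>"
proof -
  assume i: "i \<in> IDX" and x: "x \<in> C"
  have "\<bar>F i x a - F i x b\<bar> \<le> gam i * \<bar>a - b\<bar>" using gam[OF i] x by blast
  also have "\<dots> \<le> g * \<bar>a - b\<bar>" using g_ge[OF i] by (simp add: mult_right_mono)
  finally show ?thesis .
qed

lemma T_contr: assumes y: "y \<in> C"
  shows "pre (ch y) y \<in> C" "\<bar>T a y - T b y\<bar> \<le> g * \<bar>a (pre (ch y) y) - b (pre (ch y) y)\<bar>"
proof -
  note c = ch[OF y]
  show x: "pre (ch y) y \<in> C" using pre_cell(1) c by blast
  show "\<bar>T a y - T b y\<bar> \<le> g * \<bar>a (pre (ch y) y) - b (pre (ch y) y)\<bar>"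
    using F_lip[OF conjunct1[OF c] x] y by (simp add: T_def)
qed

lemma bnd: "continuous_on C f \<Longrightarrow> \<exists>K. \<forall>y\<in>C. \<bar>f y :: real\<bar> \<le> K"
proof -
  assume "continuous_on C f"
  then have "bounded (f ` C)" using compact_cube compact_continuous_image compact_imp_bounded by blast
  then show ?thesis unfolding bounded_iff by auto
qed

lemma uniq:
  assumes A: "continuous_on C A" and B: "continuous_on C B"
    and fA: "\<forall>y\<in>C. A y = T A y" and fB: "\<forall>y\<in>C. B y = T B y"
  shows "\<forall>y\<in>C. A y = B y"
proof -
  obtain K where K: "\<forall>y\<in>C. \<bar>A y - B y\<bar> \<le> K"
    using bnd[of "\<lambda>y. A y - B y"] continuous_on_diff[OF A B] by blast
  have ind: "\<forall>y\<in>C. \<bar>A y - B y\<bar> \<le> g ^ n * K" for n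
  proof (induction n)
    case 0 then show ?case using K by simp
  next
    case (Suc n)
    show ?case
    proof
      fix y assume y: "y \<in> C"
      have "\<bar>A y - B y\<bar> = \<bar>T A y - T B y\<bar>" using fA fB y by simp
      also have "\<dots> \<le> g * \<bar>A (pre (ch y) y) - B (pre (ch y) y)\<bar>" by (rule T_contr(2)[OF y])
      also have "\<dots> \<le> g * (g ^ n * K)"
        using Suc.IH T_contr(1)[OF y] g_pos by (simp add: mult_left_mono)
      finally show "\<bar>A y - B y\<bar> \<le> g ^ Suc n * K" by simp
    qed
  qed
  show ?thesis
  proof (rule ccontr)
    assume "\<not> ?thesis"
    then obtain y where y: "y \<in> C" and ne: "A y \<noteq> B y" by blast
    define d where "d = \<bar>A y - B y\<bar>"
    have d: "0 < d" using ne by (simp add: d_def)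
    have Kd: "d \<le> K" using K y by (simp add: d_def)
    then have Kp: "0 < K" using d by simp
    obtain n where n: "g ^ n < d / K" using real_arch_pow_inv[of "d / K" g] d Kp g_lt1 by auto
    have "d \<le> g ^ n * K" using ind[of n] y by (simp add: d_def)
    also have "\<dots> < d" using n Kp by (simp add: field_simps)
    finally show False by simp
  qed
qed

lemma exist: "\<exists>A. A \<in> extensional C \<and> continuous_on C A \<and> (\<forall>y\<in>C. A y = T A y)"
proof -
  define An where "An n = (T ^^ n) (\<lambda>_. 0)" for n
  have AnS: "An (Suc n) = T (An n)" for n by (simp add: An_def)
  have An0: "An 0 = (\<lambda>_. 0)" by (simp add: An_def)
  have Anc: "continuous_on C (An n)" for n
    by (induction n) (auto simp: AnS An0 intro: T_cont)
  define d where "d n y = An (Suc n) y - An n y" for n y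
  obtain D where D: "\<forall>y\<in>C. \<bar>An 1 y\<bar> \<le> D" using bnd[OF Anc[of 1]] by blast
  have bound: "\<forall>y\<in>C. \<bar>d n y\<bar> \<le> g ^ n * D" for n
  proof (induction n)
    case 0 then show ?case using D by (simp add: d_def An0)
  next
    case (Suc n)
    show ?case
    proof
      fix y assume y: "y \<in> C"
      have "\<bar>d (Suc n) y\<bar> = \<bar>T (An (Suc n)) y - T (An n) y\<bar>" by (simp add: d_def AnS)
      also have "\<dots> \<le> g * \<bar>d n (pre (ch y) y)\<bar>" unfolding d_def by (rule T_contr(2)[OF y])
      also have "\<dots> \<le> g * (g ^ n * D)"
        using Suc.IH T_contr(1)[OF y] g_pos by (simp add: mult_left_mono)
      finally show "\<bar>d (Suc n) y\<bar> \<le> g ^ Suc n * D" by simp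
    qed
  qed
  have sumeq: "An n = (\<lambda>y. \<Sum>i<n. d i y)" for n
    by (induction n) (auto simp: d_def An0)
  define S where "S y = suminf (\<lambda>i. d i y)" for y
  have summ: "summable (\<lambda>n. g ^ n * D)"
    using summable_geometric[of g] g_pos g_lt1 by (intro summable_mult2) simp
  have ul0: "uniform_limit C (\<lambda>n y. \<Sum>i<n. d i y) S sequentially"
    unfolding S_def by (rule Weierstrass_m_test[OF _ summ]) (use bound in simp)
  have ul: "uniform_limit C An S sequentially"
  proof -
    have eq: "An = (\<lambda>n y. \<Sum>i<n. d i y)" using sumeq by (rule ext)
    show ?thesis unfolding eq by (rule ul0)
  qed
  have Sc: "continuous_on C S"
    by (rule uniform_limit_theorem[OF _ ul]) (auto simp: Anc)
  define A where "A = restrict S C"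
  have Ac: "continuous_on C A" using Sc by (rule continuous_on_eq) (simp add: A_def)
  have fx: "A y = T A y" if y: "y \<in> C" for y
  proof -
    define i where "i = ch y"
    define x where "x = pre i y"
    have i: "i \<in> IDX" using ch[OF y] by (simp add: i_def)
    have x: "x \<in> C" using T_contr(1)[OF y] by (simp add: x_def i_def)
    have Tform: "T a y = F i x (a x)" for a using y by (simp add: T_def x_def i_def)
    have cF: "continuous_on UNIV (\<lambda>w. F i x w)"
    proof -
      have "continuous_on UNIV (\<lambda>w. (\<lambda>(x, w). F i x w) (x, w))"
        by (rule continuous_on_compose2[OF F_cont[OF i]]) (auto intro!: continuous_intros simp: x)
      then show ?thesis by simp
    qed
    have l1: "(\<lambda>n. An n x) \<longlonglongrightarrow> S x" by (rule tendsto_uniform_limitI[OF ul x])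
    have l2: "(\<lambda>n. F i x (An n x)) \<longlonglongrightarrow> F i x (S x)"
      by (rule isCont_tendsto_compose[OF _ l1]) (use cF in \<open>simp add: continuous_on_eq_continuous_at\<close>)
    have l3: "(\<lambda>n. An (Suc n) y) \<longlonglongrightarrow> S y"
      using tendsto_uniform_limitI[OF ul y] by (rule LIMSEQ_Suc)
    have "(\<lambda>n. An (Suc n) y) = (\<lambda>n. F i x (An n x))" by (simp add: AnS Tform)
    then have "S y = F i x (S x)" using l2 l3 LIMSEQ_unique by metis
    then show ?thesis using x y by (simp add: A_def Tform)
  qed
  show ?thesis
    using Ac fx by (intro exI[of _ A]) (simp add: A_def)
qed

lemma graph_iff:
  "((\<lambda>x. (x, A x)) ` cube q =
            (\<Union>i\<in>PiE {1..q} (\<lambda>k. {1..M k}).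
               (\<lambda>(x, w). (restrict (\<lambda>k. u k (i k) (x k)) {1..q}, F i x w)) ` ((\<lambda>x. (x, A x)) ` cube q)))
   \<longleftrightarrow> (\<forall>y\<in>C. A y = T A y)"
  (is "?G = ?R \<longleftrightarrow> _")
proof -
  have mem: "(U i x, F i x (A x)) \<in> ?R" if i: "i \<in> IDX" and x: "x \<in> C" for i x
    unfolding U_def
    apply (rule UN_I[OF i])
    apply (rule image_eqI[where x="(x, A x)"])
    using x by auto
  show ?thesis
  proof
    assume eq: "?G = ?R"
    show "\<forall>y\<in>C. A y = T A y"
    proof
      fix y assume y: "y \<in> C"
      define i where "i = ch y"
      define x where "x = pre i y"
      have i: "i \<in> IDX" and yc: "y \<in> cell i" using ch[OF y] by (simp_all add: i_def)
      have x: "x \<in> C" using pre_cell(1)[OF i yc] by (simp add: x_def)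
      have Ux: "U i x = y" using pre_cell(2)[OF i yc] by (simp add: x_def)
      have "(U i x, F i x (A x)) \<in> ?G"
        using ssubst[where P="\<lambda>S. (U i x, F i x (A x)) \<in> S", OF eq mem[OF i x]] .
      then have "F i x (A x) = A y" using Ux by auto
      then show "A y = T A y" using y by (simp add: T_def x_def i_def)
    qed
  next
    assume fx: "\<forall>y\<in>C. A y = T A y"
    have P: "A (U i x) = F i x (A x)" if i: "i \<in> IDX" and x: "x \<in> C" for i x
    proof -
      have "U i x \<in> C" using U_cell(1)[OF i x] cell_sub[OF i] by blast
      then show ?thesis using fx T_U[OF i x] by simp
    qed
    show "?G = ?R"
    proof
      show "?G \<subseteq> ?R"
      proof
        fix p assume "p \<in> ?G"
        then obtain y where y: "y \<in> C" and p: "p = (y, A y)" by blast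
        define i where "i = ch y"
        define x where "x = pre i y"
        have i: "i \<in> IDX" and yc: "y \<in> cell i" using ch[OF y] by (simp_all add: i_def)
        have x: "x \<in> C" using pre_cell(1)[OF i yc] by (simp add: x_def)
        have Ux: "U i x = y" using pre_cell(2)[OF i yc] by (simp add: x_def)
        have "p = (U i x, F i x (A x))" using p Ux P[OF i x] by simp
        then show "p \<in> ?R" using mem[OF i x] by simp
      qed
    next
      show "?R \<subseteq> ?G"
      proof
        fix p assume "p \<in> ?R"
        then obtain i where i: "i \<in> IDX" and
          pi: "p \<in> (\<lambda>(x, w). (restrict (\<lambda>k. u k (i k) (x k)) {1..q}, F i x w)) ` ((\<lambda>x. (x, A x)) ` C)"
          by (rule UN_E)
        then obtain x where x: "x \<in> C" and p: "p = (U i x, F i x (A x))" unfolding U_def by auto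
        have UC: "U i x \<in> C" using U_cell(1)[OF i x] cell_sub[OF i] by blast
        show "p \<in> ?G" unfolding p P[OF i x, symmetric] using UC by (rule imageI)
      qed
    qed
  qed
qed

definition X where "X c = restrict (\<lambda>k. xg k (c k)) {1..q}"
definition etai where "etai i c = restrict (\<lambda>k. eta (i k) (c k)) {1..q}"
abbreviation "E \<equiv> PiE {1..q} (\<lambda>j. {0, M j})"

lemma U_X: assumes i: "i \<in> IDX" and c: "c \<in> E" shows "U i (X c) = X (etai i c)"
proof
  fix k show "U i (X c) k = X (etai i c) k"
  proof (cases "k \<in> {1..q}")
    case nk: False then show ?thesis by (simp add: U_def X_def restrict_def nk del: atLeastAtMost_iff)
  next
    case k: True
    have ik: "i k \<in> {1..M k}" using i k by auto
    have Mk: "M k \<noteq> 0" using M[OF k] by simp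
    note e = U_def X_def etai_def
    have L: "U i (X c) k = u k (i k) (xg k (c k))" "X (etai i c) k = xg k (eta (i k) (c k))"
      using k by (simp_all add: e)
    have "c k \<in> {0, M k}" using c k by blast
    then consider "c k = 0" | "c k = M k" by auto
    then show ?thesis
    proof cases
      case 1 then show ?thesis unfolding L using u_odd[OF k ik] u_even[OF k ik] grid0[OF k]
        by (cases "odd (i k)") (simp_all add: eta_def)
    next
      case 2 then show ?thesis unfolding L using u_odd[OF k ik] u_even[OF k ik] grid1[OF k] Mk
        by (cases "odd (i k)") (simp_all add: eta_def)
    qed
  qed
qed

lemma V:
  assumes P: "\<forall>y\<in>C. A y = T A y" and i: "i \<in> IDX" and c: "c \<in> E" and Ac: "A (X c) = z c"
  shows "A (X (etai i c)) = z (etai i c)"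
proof -
  have Xc: "X c \<in> C"
  proof -
    have "X c \<in> cube q" unfolding X_def cube_def
    proof (rule PiE_I)
      fix k assume k: "k \<in> {1..q}"
      have "c k \<in> {0, M k}" using c k by blast
      then have "c k \<le> M k" by auto
      then show "restrict (\<lambda>k. xg k (c k)) {1..q} k \<in> {0..1}" using xg_range[OF k] k by simp
    qed (simp add: restrict_def del: atLeastAtMost_iff)
    then show ?thesis .
  qed
  have "U i (X c) \<in> C" using U_cell(1)[OF i Xc] cell_sub[OF i] by blast
  then have "A (U i (X c)) = T A (U i (X c))" using P by blast
  then have "A (U i (X c)) = F i (X c) (A (X c))" using T_U[OF i Xc] by simp
  then have "A (X (etai i c)) = F i (X c) (A (X c))" using U_X[OF i c] by simp
  also have "\<dots> = z (etai i c)" unfolding Ac unfolding X_def etai_def by (rule F_vert[OF i c])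
  finally show ?thesis .
qed

lemma fixed_corner:
  assumes P: "\<forall>y\<in>C. A y = T A y" and c: "c \<in> E" and oc: "\<forall>k\<in>{1..q}. c k = 0 \<or> odd (M k)"
  shows "A (X c) = z c"
proof -
  define i where "i = restrict (\<lambda>k. if c k = 0 then 1 else M k) {1..q}"
  have M1: "\<forall>k\<in>{1..q}. 1 \<le> M k" using M by (metis le_trans one_le_numeral)
  have i: "i \<in> IDX" using M1 by (auto simp: i_def PiE_iff)
  have ec: "etai i c = c"
  proof
    fix k show "etai i c k = c k"
    proof (cases "k \<in> {1..q}")
      case nk: False then show ?thesis using PiE_arb[OF c nk] by (simp add: etai_def restrict_def nk del: atLeastAtMost_iff)
    next
      case k: True
      have Mk: "M k \<noteq> 0" using M[OF k] by simp
      have L: "etai i c k = eta (i k) (c k)" "i k = (if c k = 0 then 1 else M k)"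
        using k by (simp_all add: etai_def i_def)
      have "c k \<in> {0, M k}" using c k by blast
      then consider "c k = 0" | "c k = M k" "odd (M k)" using oc[rule_format, OF k] Mk by auto
      then show ?thesis
      proof cases
        case 1 then show ?thesis unfolding L by (simp add: eta_def)
      next
        case 2 then show ?thesis unfolding L using Mk by (simp add: eta_def)
      qed
    qed
  qed
  have Xc: "X c \<in> C"
  proof -
    have "X c \<in> cube q" unfolding X_def cube_def
    proof (rule PiE_I)
      fix k assume k: "k \<in> {1..q}"
      have "c k \<in> {0, M k}" using c k by blast
      then have "c k \<le> M k" by auto
      then show "restrict (\<lambda>k. xg k (c k)) {1..q} k \<in> {0..1}" using xg_range[OF k] k by simp
    qed (simp add: restrict_def del: atLeastAtMost_iff)
    then show ?thesis .
  qed
  have UX: "U i (X c) = X c" using U_X[OF i c] ec by simp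
  have UC: "U i (X c) \<in> C" using Xc UX by simp
  have a1: "A (X c) = F i (X c) (A (X c))" using P UC T_U[OF i Xc] UX by metis
  have a2: "z c = F i (X c) (z c)" using F_vert[OF i c] ec by (simp add: X_def etai_def)
  have "\<bar>A (X c) - z c\<bar> \<le> g * \<bar>A (X c) - z c\<bar>"
    using F_lip[OF i Xc, of "A (X c)" "z c"] a1 a2 by simp
  show ?thesis
  proof (rule ccontr)
    assume "A (X c) \<noteq> z c"
    then have "0 < \<bar>A (X c) - z c\<bar>" by simp
    then have "g * \<bar>A (X c) - z c\<bar> < 1 * \<bar>A (X c) - z c\<bar>"
      using g_lt1 by (intro mult_strict_right_mono) auto
    then show False using \<open>\<bar>A (X c) - z c\<bar> \<le> g * \<bar>A (X c) - z c\<bar>\<close> by simp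
  qed
qed

lemma corner:
  assumes P: "\<forall>y\<in>C. A y = T A y" and c: "c \<in> E"
  shows "A (X c) = z c"
proof -
  define s where "s = restrict (\<lambda>k. if c k \<noteq> 0 \<and> odd (M k) then M k else 0) {1..q}"
  define i where "i = restrict (\<lambda>k. if c k = 0 then 1 else M k) {1..q}"
  have M1: "\<forall>k\<in>{1..q}. 1 \<le> M k" using M by (metis le_trans one_le_numeral)
  have i: "i \<in> IDX" using M1 by (auto simp: i_def PiE_iff)
  have s: "s \<in> E" by (auto simp: s_def PiE_iff)
  have As: "A (X s) = z s" by (rule fixed_corner[OF P s]) (auto simp: s_def)
  have es: "etai i s = c"
  proof
    fix k show "etai i s k = c k"
    proof (cases "k \<in> {1..q}")
      case nk: False then show ?thesis using PiE_arb[OF c nk] by (simp add: etai_def restrict_def nk del: atLeastAtMost_iff)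
    next
      case k: True
      have Mk: "M k \<noteq> 0" using M[OF k] by simp
      have L: "etai i s k = eta (i k) (s k)" "i k = (if c k = 0 then 1 else M k)"
           "s k = (if c k \<noteq> 0 \<and> odd (M k) then M k else 0)"
        using k by (simp_all add: etai_def i_def s_def)
      have "c k \<in> {0, M k}" using c k by blast
      then consider "c k = 0" | "c k = M k" "odd (M k)" | "c k = M k" "even (M k)" using Mk by auto
      then show ?thesis
      proof cases
        case 1 then show ?thesis unfolding L by (simp add: eta_def)
      next
        case 2 then show ?thesis unfolding L using Mk by (simp add: eta_def)
      next
        case 3 then show ?thesis unfolding L using Mk by (simp add: eta_def)
      qed
    qed
  qed
  show ?thesis using V[OF P i s As] es by simp
qed

lemma grid:
  assumes P: "\<forall>y\<in>C. A y = T A y" and j: "j \<in> PiE {1..q} (\<lambda>k. {0..M k})"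
  shows "A (X j) = z j"
proof -
  define c where "c = restrict (\<lambda>k. if j k = 0 then 0 else if odd (j k) then M k else 0) {1..q}"
  define i where "i = restrict (\<lambda>k. if j k = 0 then 1 else j k) {1..q}"
  have M1: "\<forall>k\<in>{1..q}. 1 \<le> M k" using M by (metis le_trans one_le_numeral)
  have i: "i \<in> IDX" using j M1 by (auto simp: i_def PiE_iff)
  have c: "c \<in> E" by (auto simp: c_def PiE_iff)
  have es: "etai i c = j"
  proof
    fix k show "etai i c k = j k"
    proof (cases "k \<in> {1..q}")
      case nk: False then show ?thesis using PiE_arb[OF j nk] by (simp add: etai_def restrict_def nk del: atLeastAtMost_iff)
    next
      case k: True
      have Mk: "M k \<noteq> 0" using M[OF k] by simp
      have e1: "etai i c k = eta (i k) (c k)" using k by (simp add: etai_def)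
      have e2: "i k = (if j k = 0 then 1 else j k)" using k by (simp add: i_def)
      have e3: "c k = (if j k = 0 then 0 else if odd (j k) then M k else 0)" using k by (simp add: c_def)
      consider "j k = 0" | "j k \<noteq> 0" "odd (j k)" | "j k \<noteq> 0" "even (j k)" by blast
      then show ?thesis
      proof cases
        case 1 then show ?thesis unfolding e1 e2 e3 by (simp add: eta_def)
      next
        case 2 then show ?thesis unfolding e1 e2 e3 using Mk by (simp add: eta_def)
      next
        case 3 then show ?thesis unfolding e1 e2 e3 by (simp add: eta_def)
      qed
    qed
  qed
  show ?thesis using V[OF P i c corner[OF P c]] es by simp
qed

lemma main:
  shows "(\<exists>!A. A \<in> extensional (cube q) \<and> continuous_on (cube q) A \<and>
            (\<lambda>x. (x, A x)) ` cube q =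
            (\<Union>i\<in>PiE {1..q} (\<lambda>k. {1..M k}).
               (\<lambda>(x, w). (restrict (\<lambda>k. u k (i k) (x k)) {1..q}, F i x w)) ` ((\<lambda>x. (x, A x)) ` cube q)))
      \<and> (\<forall>A. A \<in> extensional (cube q) \<and> continuous_on (cube q) A \<and>
            (\<lambda>x. (x, A x)) ` cube q =
            (\<Union>i\<in>PiE {1..q} (\<lambda>k. {1..M k}).
               (\<lambda>(x, w). (restrict (\<lambda>k. u k (i k) (x k)) {1..q}, F i x w)) ` ((\<lambda>x. (x, A x)) ` cube q))
          \<longrightarrow> (\<forall>j\<in>PiE {1..q} (\<lambda>k. {0..M k}). A (restrict (\<lambda>k. xg k (j k)) {1..q}) = z j))"
proof (intro conjI allI impI ballI)
  obtain A where A: "A \<in> extensional C" "continuous_on C A" "\<forall>y\<in>C. A y = T A y" using exist by blast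
  show "\<exists>!A. A \<in> extensional (cube q) \<and> continuous_on (cube q) A \<and>
            (\<lambda>x. (x, A x)) ` cube q =
            (\<Union>i\<in>PiE {1..q} (\<lambda>k. {1..M k}).
               (\<lambda>(x, w). (restrict (\<lambda>k. u k (i k) (x k)) {1..q}, F i x w)) ` ((\<lambda>x. (x, A x)) ` cube q))"
    unfolding graph_iff
  proof (rule ex1I[of _ A])
    show "A \<in> extensional C \<and> continuous_on C A \<and> (\<forall>y\<in>C. A y = T A y)" using A by blast
  next
    fix B assume B: "B \<in> extensional C \<and> continuous_on C B \<and> (\<forall>y\<in>C. B y = T B y)"
    have "\<forall>y\<in>C. B y = A y" using uniq[of B A, OF _ A(2) _ A(3)] B by blast
    then show "B = A" by (intro extensionalityI[OF conjunct1[OF B] A(1)]) blast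
  qed
next
  fix A j
  assume h: "A \<in> extensional (cube q) \<and> continuous_on (cube q) A \<and>
            (\<lambda>x. (x, A x)) ` cube q =
            (\<Union>i\<in>PiE {1..q} (\<lambda>k. {1..M k}).
               (\<lambda>(x, w). (restrict (\<lambda>k. u k (i k) (x k)) {1..q}, F i x w)) ` ((\<lambda>x. (x, A x)) ` cube q))"
    and j: "j \<in> PiE {1..q} (\<lambda>k. {0..M k})"
  have P: "\<forall>y\<in>C. A y = T A y" by (rule iffD1[OF graph_iff conjunct2[OF conjunct2[OF h]]])
  show "A (restrict (\<lambda>k. xg k (j k)) {1..q}) = z j" using grid[OF P j] unfolding X_def .
qed

end


theorem theorem3p1:
  fixes q :: nat
    and M :: "nat \<Rightarrow> nat"
    and xg :: "nat \<Rightarrow> nat \<Rightarrow> real"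
    and z :: "(nat \<Rightarrow> nat) \<Rightarrow> real"
    and u :: "nat \<Rightarrow> nat \<Rightarrow> real \<Rightarrow> real"
    and F :: "(nat \<Rightarrow> nat) \<Rightarrow> (nat \<Rightarrow> real) \<Rightarrow> real \<Rightarrow> real"
  assumes q: "q \<ge> 1"
    and M: "\<And>k. k \<in> {1..q} \<Longrightarrow> M k \<ge> 2"
    and grid0: "\<And>k. k \<in> {1..q} \<Longrightarrow> xg k 0 = 0"
    and grid1: "\<And>k. k \<in> {1..q} \<Longrightarrow> xg k (M k) = 1"
    and grid_mono: "\<And>k i. k \<in> {1..q} \<Longrightarrow> i < M k \<Longrightarrow> xg k i < xg k (Suc i)"
    and u_homeo: "\<And>k i. k \<in> {1..q} \<Longrightarrow> i \<in> {1..M k} \<Longrightarrow>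
        \<exists>g. homeomorphism {0..1} {xg k (i - 1)..xg k i} (u k i) g"
    and u_contr: "\<And>k i. k \<in> {1..q} \<Longrightarrow> i \<in> {1..M k} \<Longrightarrow>
        \<exists>\<mu>. 0 < \<mu> \<and> \<mu> < 1 \<and>
          (\<forall>a\<in>{0..1}. \<forall>b\<in>{0..1}. \<bar>u k i a - u k i b\<bar> \<le> \<mu> * \<bar>a - b\<bar>)"
    and u_odd: "\<And>k i. k \<in> {1..q} \<Longrightarrow> i \<in> {1..M k} \<Longrightarrow> odd i \<Longrightarrow>
        u k i 0 = xg k (i - 1) \<and> u k i 1 = xg k i"
    and u_even: "\<And>k i. k \<in> {1..q} \<Longrightarrow> i \<in> {1..M k} \<Longrightarrow> even i \<Longrightarrow>
        u k i 0 = xg k i \<and> u k i 1 = xg k (i - 1)"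
    and F_cont: "\<And>i. i \<in> PiE {1..q} (\<lambda>k. {1..M k}) \<Longrightarrow>
        continuous_on (cube q \<times> UNIV) (\<lambda>(x, w). F i x w)"
    and F_vert: "\<And>i e. i \<in> PiE {1..q} (\<lambda>k. {1..M k}) \<Longrightarrow> e \<in> PiE {1..q} (\<lambda>j. {0, M j}) \<Longrightarrow>
        F i (restrict (\<lambda>j. xg j (e j)) {1..q}) (z e) = z (restrict (\<lambda>j. eta (i j) (e j)) {1..q})"
    and F_contr: "\<And>i. i \<in> PiE {1..q} (\<lambda>k. {1..M k}) \<Longrightarrow>
        \<exists>\<gamma>. 0 < \<gamma> \<and> \<gamma> < 1 \<and>
          (\<forall>x\<in>cube q. \<forall>a b. \<bar>F i x a - F i x b\<bar> \<le> \<gamma> * \<bar>a - b\<bar>)"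
    and F_match: "\<And>k i x w. k \<in> {1..q} \<Longrightarrow> i \<in> PiE {1..q} (\<lambda>k. {1..M k}) \<Longrightarrow>
        i k \<in> {1..M k - 1} \<Longrightarrow> x \<in> cube q \<Longrightarrow>
        F i (x(k := the_inv_into {0..1} (u k (i k)) (xg k (i k)))) w =
        F (i(k := Suc (i k))) (x(k := the_inv_into {0..1} (u k (i k)) (xg k (i k)))) w"
  shows "(\<exists>!A. A \<in> extensional (cube q) \<and> continuous_on (cube q) A \<and>
            (\<lambda>x. (x, A x)) ` cube q =
            (\<Union>i\<in>PiE {1..q} (\<lambda>k. {1..M k}).
               (\<lambda>(x, w). (restrict (\<lambda>k. u k (i k) (x k)) {1..q}, F i x w)) ` ((\<lambda>x. (x, A x)) ` cube q)))
      \<and> (\<forall>A. A \<in> extensional (cube q) \<and> continuous_on (cube q) A \<and>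
            (\<lambda>x. (x, A x)) ` cube q =
            (\<Union>i\<in>PiE {1..q} (\<lambda>k. {1..M k}).
               (\<lambda>(x, w). (restrict (\<lambda>k. u k (i k) (x k)) {1..q}, F i x w)) ` ((\<lambda>x. (x, A x)) ` cube q))
          \<longrightarrow> (\<forall>j\<in>PiE {1..q} (\<lambda>k. {0..M k}). A (restrict (\<lambda>k. xg k (j k)) {1..q}) = z j))"
proof -
  interpret fif q M xg z u F
    by (rule fif.intro) (fact q M grid0 grid1 grid_mono u_homeo u_contr u_odd u_even F_cont F_vert F_contr F_match)+
  show ?thesis by (rule main)
qed

end
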